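(* Let $\ket\psi$ be a pure $n$-qubit state, and let $p_1$ be the output distribution of the $1$-copy hidden cut circuit on $\ket\psi$. Let $H=\{\bm s\in\{0,1\}^n : P(\bm s)=1\}$. Then: (i) $H$ is a subgroup of $(\{0,1\}^n,\oplus)$ containing $\bm 0$ and $\bm 1$; (ii) for $\bm s\in\{0,1\}^n$ the following are equivalent: (a) $\bm s\in H$; (b) $P(\bm s'\oplus\bm s)=P(\bm s')$ for all $\bm s'\in\{0,1\}^n$; (c) $\bm s\cdot\bm x=0$ for every $\bm x$ with $p_1(\bm x)>0$.
   Context: Subsystems are bitstrings $\bm s\in\{0,1\}^n$ (qubit $j$ included iff $s_j=1$), $\bm 0,\bm 1$ are the all-zeros and all-ones strings, $\oplus$ is bitwise addition mod 2 and $\bm x\cdot\bm s$ the dot product mod 2. $\rho_{\bm s}=\mathrm{Tr}_{\bar{\bm s}}\ket\psi\bra\psi$ and $P(\bm s)=\mathrm{Tr}(\rho_{\bm s}^2)$ (with $P(\bm 0)=1$). $\mathrm{SWAP}_{\bm s}$ swaps the qubits of subsystem $\bm s$ between two copies of the $n$-qubit space. The $t$-copy hidden cut circuit: an $n$-qubit group register is initialized to $\ket{0^n}$ and a state register to $(\ket\psi\ket\psi)^{\otimes t}$; apply $H^{\otimes n}$ to the group register; apply $\sum_{\bm s}\ket{\bm s}\bra{\bm s}\otimes \mathrm{SWAP}_{\bm s}^{\otimes t}$; apply $H^{\otimes n}$ to the group register; measure the group register in the computational basis; $p_t$ denotes the resulting distribution. *)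

theory Defs
  imports Complex_Main "HOL-Algebra.Group"
begin

text \<open>A bitstring s in {0,1}^n is represented by the set of positions j < n
  with s_j = 1, i.e. by an element of Pow {0..<n}. Bitwise XOR is symmetric difference,
  the all-zeros string is {} and the all-ones string is {0..<n}.
  An n-qubit pure state is given by its amplitudes psi :: nat set => complex on the
  computational basis Pow {0..<n}.\<close>

definition bitxor :: "nat set \<Rightarrow> nat set \<Rightarrow> nat set" where
  "bitxor s s' = (s - s') \<union> (s' - s)"

definition bitdot :: "nat set \<Rightarrow> nat set \<Rightarrow> nat" where
  "bitdot x s = card (x \<inter> s) mod 2"

definition bitgroup :: "nat \<Rightarrow> nat set monoid" where
  "bitgroup n = \<lparr>carrier = Pow {0..<n}, mult = bitxor, one = {}\<rparr>"

definition is_pure_state :: "nat \<Rightarrow> (nat set \<Rightarrow> complex) \<Rightarrow> bool" where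
  "is_pure_state n psi \<longleftrightarrow> (\<Sum>a\<in>Pow {0..<n}. (cmod (psi a))\<^sup>2) = 1"

text \<open>Reduced density matrix rho_s = Tr_{complement of s} |psi><psi|, entries indexed by
  basis strings a, b of subsystem s (subsets of s).\<close>
definition rdm :: "nat \<Rightarrow> (nat set \<Rightarrow> complex) \<Rightarrow> nat set \<Rightarrow> nat set \<Rightarrow> nat set \<Rightarrow> complex" where
  "rdm n psi s a b = (\<Sum>c\<in>Pow ({0..<n} - s). psi (a \<union> c) * cnj (psi (b \<union> c)))"

definition purity :: "nat \<Rightarrow> (nat set \<Rightarrow> complex) \<Rightarrow> nat set \<Rightarrow> complex" where
  "purity n psi s = (\<Sum>a\<in>Pow s. \<Sum>b\<in>Pow s. rdm n psi s a b * rdm n psi s b a)"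

text \<open>The state register consists of 2t copies of the
  n-qubit space (copies 2j and 2j+1 form the j-th pair |psi>|psi>); its basis states are
  functions y with y k a bitstring for k < 2t and y k = {} otherwise.
  A joint amplitude is a function F g y of a group-register basis string g and
  state-register basis state y.\<close>
definition state_basis :: "nat \<Rightarrow> nat \<Rightarrow> (nat \<Rightarrow> nat set) set" where
  "state_basis n t = {y. (\<forall>k<2*t. y k \<subseteq> {0..<n}) \<and> (\<forall>k\<ge>2*t. y k = {})}"

definition hc_init :: "nat \<Rightarrow> (nat set \<Rightarrow> complex) \<Rightarrow> nat set \<Rightarrow> (nat \<Rightarrow> nat set) \<Rightarrow> complex" where
  "hc_init t psi g y = (if g = {} then (\<Prod>k<2*t. psi (y k)) else 0)"

definition hadamard_grp ::
  "nat \<Rightarrow> (nat set \<Rightarrow> (nat \<Rightarrow> nat set) \<Rightarrow> complex) \<Rightarrow> nat set \<Rightarrow> (nat \<Rightarrow> nat set) \<Rightarrow> complex" where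
  "hadamard_grp n F g y =
     complex_of_real (1 / sqrt (2 ^ n)) * (\<Sum>s\<in>Pow {0..<n}. (-1) ^ card (g \<inter> s) * F s y)"

text \<open>SWAP_s tensor t on the basis of the state register (an involution on basis states).\<close>
definition swap_basis :: "nat set \<Rightarrow> nat \<Rightarrow> (nat \<Rightarrow> nat set) \<Rightarrow> nat \<Rightarrow> nat set" where
  "swap_basis s t y k =
     (if k < 2*t then
        (if even k then (y k - s) \<union> (y (k+1) \<inter> s) else (y k - s) \<union> (y (k-1) \<inter> s))
      else y k)"

text \<open>The controlled operator sum_s |s><s| (x) SWAP_s^{(x) t}.\<close>
definition cswap ::
  "nat \<Rightarrow> (nat set \<Rightarrow> (nat \<Rightarrow> nat set) \<Rightarrow> complex) \<Rightarrow> nat set \<Rightarrow> (nat \<Rightarrow> nat set) \<Rightarrow> complex" where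
  "cswap t F g y = F g (swap_basis g t y)"

definition hc_final :: "nat \<Rightarrow> nat \<Rightarrow> (nat set \<Rightarrow> complex) \<Rightarrow> nat set \<Rightarrow> (nat \<Rightarrow> nat set) \<Rightarrow> complex" where
  "hc_final n t psi = hadamard_grp n (cswap t (hadamard_grp n (hc_init t psi)))"

definition hc_dist :: "nat \<Rightarrow> nat \<Rightarrow> (nat set \<Rightarrow> complex) \<Rightarrow> nat set \<Rightarrow> real" where
  "hc_dist n t psi x = (\<Sum>y\<in>state_basis n t. (cmod (hc_final n t psi x y))\<^sup>2)"

end

theory Submission
  imports Defs
begin

abbreviation chi :: "nat set \<Rightarrow> nat set \<Rightarrow> 'a::ring_1" where
  "chi x s \<equiv> (-1) ^ card (x \<inter> s)"

lemma chi_mult: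
  assumes "finite x"
  shows "(chi x g :: 'a::ring_1) * chi x h = chi x (bitxor g h)"
proof -
  have f: "finite (x \<inter> g - h)" "finite (x \<inter> g \<inter> h)" "finite (x \<inter> h - g)" using assms by auto
  have 1: "card (x \<inter> g) = card (x \<inter> g - h) + card (x \<inter> g \<inter> h)"
  proof -
    have "x \<inter> g = (x \<inter> g - h) \<union> (x \<inter> g \<inter> h)" by blast
    then show ?thesis using card_Un_disjoint[OF f(1) f(2)] by auto
  qed
  have 2: "card (x \<inter> h) = card (x \<inter> h - g) + card (x \<inter> g \<inter> h)"
  proof -
    have "x \<inter> h = (x \<inter> h - g) \<union> (x \<inter> g \<inter> h)" by blast
    then show ?thesis using card_Un_disjoint[OF f(3) f(2)] by auto
  qed
  have 3: "card (x \<inter> bitxor g h) = card (x \<inter> g - h) + card (x \<inter> h - g)"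
  proof -
    have "x \<inter> bitxor g h = (x \<inter> g - h) \<union> (x \<inter> h - g)" unfolding bitxor_def by blast
    then show ?thesis using card_Un_disjoint[OF f(1) f(3)] by auto
  qed
  have "card (x \<inter> g) + card (x \<inter> h) = card (x \<inter> bitxor g h) + 2 * card (x \<inter> g \<inter> h)"
    using 1 2 3 by simp
  then have "(chi x g :: 'a) * chi x h = (-1) ^ (card (x \<inter> bitxor g h) + 2 * card (x \<inter> g \<inter> h))"
    by (metis power_add)
  also have "\<dots> = chi x (bitxor g h)" by (simp add: power_add power_mult)
  finally show ?thesis .
qed

lemma chi_sum:
  assumes "finite N"
  shows "(\<Sum>x\<in>Pow N. (chi x u :: 'a::ring_1)) = (if N \<inter> u = {} then 2 ^ card N else 0)"
  using assms
proof (induction N rule: finite_induct)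
  case empty
  then show ?case by simp
next
  case (insert j N)
  have disj: "Pow N \<inter> insert j ` Pow N = {}" using insert by auto
  have inj: "inj_on (insert j) (Pow N)"
  proof (rule inj_onI)
    fix x y assume xy: "x \<in> Pow N" "y \<in> Pow N" "insert j x = insert j y"
    then have "j \<notin> x" "j \<notin> y" using insert by auto
    then show "x = y" using xy(3) by (metis Diff_insert_absorb)
  qed
  have c: "chi (insert j x) u = (if j \<in> u then - chi x u else (chi x u :: 'a))" if "x \<in> Pow N" for x
  proof -
    have fx: "finite x" using that insert by (auto intro: finite_subset)
    have jx: "j \<notin> x" using that insert by auto
    show ?thesis
    proof (cases "j \<in> u")
      case True
      then have "insert j x \<inter> u = insert j (x \<inter> u)" by auto
      then show ?thesis using True fx jx by simp
    next
      case False
      then have "insert j x \<inter> u = x \<inter> u" by auto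
      then show ?thesis using False by simp
    qed
  qed
  have "(\<Sum>x\<in>Pow (insert j N). (chi x u :: 'a)) =
        (\<Sum>x\<in>Pow N. chi x u) + (\<Sum>x\<in>insert j ` Pow N. chi x u)"
    unfolding Pow_insert using insert disj by (simp add: sum.union_disjoint)
  also have "(\<Sum>x\<in>insert j ` Pow N. (chi x u :: 'a)) = (\<Sum>x\<in>Pow N. chi (insert j x) u)"
    using sum.reindex[OF inj] by simp
  also have "\<dots> = (\<Sum>x\<in>Pow N. if j \<in> u then - chi x u else (chi x u :: 'a))"
    using c by (rule sum.cong[OF refl])
  finally have eq: "(\<Sum>x\<in>Pow (insert j N). (chi x u :: 'a)) =
      (\<Sum>x\<in>Pow N. chi x u) + (\<Sum>x\<in>Pow N. if j \<in> u then - chi x u else (chi x u :: 'a))" .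
  show ?case
  proof (cases "j \<in> u")
    case True
    then show ?thesis using eq by (simp add: sum_negf)
  next
    case False
    then have "insert j N \<inter> u = N \<inter> u" by auto
    then show ?thesis using eq insert.IH False insert.hyps by (simp add: mult_2)
  qed
qed

definition Phi :: "(nat set \<Rightarrow> complex) \<Rightarrow> nat set \<Rightarrow> nat set \<Rightarrow> nat set \<Rightarrow> complex" where
  "Phi psi g a b = psi ((a - g) \<union> (b \<inter> g)) * psi ((b - g) \<union> (a \<inter> g))"

lemma c_sq: "complex_of_real (1 / sqrt (2 ^ n)) * complex_of_real (1 / sqrt (2 ^ n)) = 1 / 2 ^ n"
proof -
  have e: "sqrt (2 ^ n) * sqrt (2 ^ n) = (2 ^ n :: real)"
    using real_sqrt_mult_self[of "2 ^ n"] by simp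
  have r: "(1 / sqrt (2 ^ n)) * (1 / sqrt (2 ^ n)) = (1 / 2 ^ n :: real)"
    by (simp only: times_divide_times_eq e mult_1)
  have "complex_of_real (1 / sqrt (2 ^ n)) * complex_of_real (1 / sqrt (2 ^ n)) =
        complex_of_real ((1 / sqrt (2 ^ n)) * (1 / sqrt (2 ^ n)))" by (simp only: of_real_mult)
  also have "\<dots> = complex_of_real (1 / 2 ^ n)" by (simp only: r)
  also have "\<dots> = 1 / 2 ^ n" by simp
  finally show ?thesis .
qed

lemma hc_init1: "hc_init 1 psi s y = (if s = {} then psi (y 0) * psi (y 1) else 0)"
  unfolding hc_init_def by (simp add: numeral_2_eq_2 lessThan_Suc)
lemma had_init: "hadamard_grp n (hc_init 1 psi) g y =
   complex_of_real (1 / sqrt (2 ^ n)) * (psi (y 0) * psi (y 1))"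
proof -
  have "(\<Sum>s\<in>Pow {0..<n}. (-1) ^ card (g \<inter> s) * hc_init 1 psi s y) =
        (\<Sum>s\<in>Pow {0..<n}. if s = {} then psi (y 0) * psi (y 1) else 0)"
    by (rule sum.cong[OF refl]) (simp only: hc_init1, simp)
  also have "\<dots> = psi (y 0) * psi (y 1)" by (simp add: sum.delta')
  finally show ?thesis unfolding hadamard_grp_def by simp
qed

lemma hc_final1: "hc_final n 1 psi x y =
   (1 / 2 ^ n) * (\<Sum>g\<in>Pow {0..<n}. chi x g * Phi psi g (y 0) (y 1))"
proof -
  have sw: "swap_basis g 1 y 0 = (y 0 - g) \<union> (y 1 \<inter> g)" "swap_basis g 1 y 1 = (y 1 - g) \<union> (y 0 \<inter> g)" for g
    unfolding swap_basis_def by auto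
  have "hc_final n 1 psi x y = complex_of_real (1 / sqrt (2 ^ n)) *
     (\<Sum>g\<in>Pow {0..<n}. chi x g * (complex_of_real (1 / sqrt (2 ^ n)) * Phi psi g (y 0) (y 1)))"
    unfolding hc_final_def hadamard_grp_def[of n "cswap 1 _"] cswap_def had_init Phi_def sw
    by (simp add: Int_commute)
  also have "\<dots> = (complex_of_real (1 / sqrt (2 ^ n)) * complex_of_real (1 / sqrt (2 ^ n))) *
     (\<Sum>g\<in>Pow {0..<n}. chi x g * Phi psi g (y 0) (y 1))"
    by (simp add: sum_distrib_left mult_ac)
  finally show ?thesis by (simp only: c_sq)
qed

lemma hc_final1': "hc_final n (Suc 0) psi x y =
   (1 / 2 ^ n) * (\<Sum>g\<in>Pow {0..<n}. chi x g * Phi psi g (y 0) (y 1))"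
  using hc_final1 by simp

definition mk :: "nat set \<Rightarrow> nat set \<Rightarrow> nat \<Rightarrow> nat set" where
  "mk a b = (\<lambda>k. if k = 0 then a else if k = 1 then b else {})"

lemma mk_bij: "bij_betw (\<lambda>(a, b). mk a b) (Pow {0..<n} \<times> Pow {0..<n}) (state_basis n 1)"
proof (rule bij_betw_byWitness[where f' = "\<lambda>y. (y 0, y 1)"])
  show "\<forall>a\<in>Pow {0..<n} \<times> Pow {0..<n}. (\<lambda>y. (y 0, y 1)) ((\<lambda>(a, b). mk a b) a) = a"
    by (auto simp: mk_def)
  show "\<forall>a'\<in>state_basis n 1. (\<lambda>(a, b). mk a b) (a' 0, a' 1) = a'"
    by (auto simp: mk_def state_basis_def fun_eq_iff)
  show "(\<lambda>(a, b). mk a b) ` (Pow {0..<n} \<times> Pow {0..<n}) \<subseteq> state_basis n 1"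
    unfolding mk_def state_basis_def by (auto split: if_splits) (auto simp: subset_iff)
  show "(\<lambda>y. (y 0, y 1)) ` state_basis n 1 \<subseteq> Pow {0..<n} \<times> Pow {0..<n}"
  proof (rule image_subsetI)
    fix y assume "y \<in> state_basis n 1"
    then have h: "\<forall>k<2. y k \<subseteq> {0..<n}" by (simp add: state_basis_def)
    have "y 0 \<subseteq> {0..<n}" "y 1 \<subseteq> {0..<n}" using h by auto
    then show "(y 0, y 1) \<in> Pow {0..<n} \<times> Pow {0..<n}" by simp
  qed
qed

definition F :: "nat \<Rightarrow> (nat set \<Rightarrow> complex) \<Rightarrow> nat set \<Rightarrow> nat set \<Rightarrow> nat set \<Rightarrow> complex" where
  "F n psi x a b = (\<Sum>g\<in>Pow {0..<n}. chi x g * Phi psi g a b)"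

lemma hc_dist1: "hc_dist n 1 psi x =
  (1 / 2 ^ n)^2 * (\<Sum>a\<in>Pow {0..<n}. \<Sum>b\<in>Pow {0..<n}. (cmod (F n psi x a b))\<^sup>2)"
proof -
  have "hc_dist n 1 psi x = (\<Sum>p\<in>Pow {0..<n} \<times> Pow {0..<n}. (cmod (hc_final n 1 psi x ((\<lambda>(a, b). mk a b) p)))\<^sup>2)"
    unfolding hc_dist_def using sum.reindex_bij_betw[OF mk_bij, symmetric] by blast
  also have "\<dots> = (\<Sum>p\<in>Pow {0..<n} \<times> Pow {0..<n}. (1 / 2 ^ n)^2 * (cmod (F n psi x (fst p) (snd p)))\<^sup>2)"
    by (rule sum.cong) (auto simp: hc_final1' mk_def F_def norm_mult norm_divide norm_power power_divide)
  also have "\<dots> = (1 / 2 ^ n)^2 * (\<Sum>a\<in>Pow {0..<n}. \<Sum>b\<in>Pow {0..<n}. (cmod (F n psi x a b))\<^sup>2)"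
    by (simp add: sum.cartesian_product sum_distrib_left split_def)
  finally show ?thesis .
qed

definition sw :: "nat set \<Rightarrow> nat set \<times> nat set \<Rightarrow> nat set \<times> nat set" where
  "sw g p = ((fst p - g) \<union> (snd p \<inter> g), (snd p - g) \<union> (fst p \<inter> g))"

definition PP :: "(nat set \<Rightarrow> complex) \<Rightarrow> nat set \<times> nat set \<Rightarrow> complex" where
  "PP psi q = psi (fst q) * psi (snd q)"

definition Q :: "nat \<Rightarrow> (nat set \<Rightarrow> complex) \<Rightarrow> nat set \<Rightarrow> complex" where
  "Q n psi s = (\<Sum>q\<in>Pow {0..<n} \<times> Pow {0..<n}. PP psi q * cnj (PP psi (sw s q)))"

lemma Phi_sw: "Phi psi g a b = PP psi (sw g (a, b))"
  by (simp add: Phi_def PP_def sw_def)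

lemma sw_xor: "sw (bitxor g s) p = sw s (sw g p)"
  unfolding sw_def bitxor_def by auto

lemma sw_sw: "sw g (sw g p) = p"
  unfolding sw_def by (cases p) auto

lemma sw_in: "p \<in> Pow N \<times> Pow N \<Longrightarrow> sw g p \<in> Pow N \<times> Pow N"
  unfolding sw_def by auto

lemma L5: "(\<Sum>p\<in>Pow N \<times> Pow N. PP psi (sw g p) * cnj (PP psi (sw (bitxor g s) p))) =
           (\<Sum>q\<in>Pow N \<times> Pow N. PP psi q * cnj (PP psi (sw s q)))"
  by (rule sum.reindex_bij_witness[where i = "sw g" and j = "sw g"])
     (auto simp: sw_sw sw_in sw_xor)

lemma split_Pow:
  assumes "s \<subseteq> N"
  shows "(\<Sum>a\<in>Pow N. f a) = (\<Sum>a1\<in>Pow s. \<Sum>c\<in>Pow (N - s). f (a1 \<union> c))"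
proof -
  have "(\<Sum>a1\<in>Pow s. \<Sum>c\<in>Pow (N - s). f (a1 \<union> c)) = (\<Sum>p\<in>Pow s \<times> Pow (N - s). f (fst p \<union> snd p))"
    by (simp add: sum.cartesian_product split_def)
  also have "\<dots> = (\<Sum>a\<in>Pow N. f a)"
    by (rule sum.reindex_bij_witness[where i = "\<lambda>a. (a \<inter> s, a - s)" and j = "\<lambda>p. fst p \<union> snd p"])
       (use assms in auto)
  finally show ?thesis by simp
qed

lemma L7:
  assumes "s \<subseteq> {0..<n}"
  shows "Q n psi s = purity n psi s"
proof -
  let ?N = "{0..<n}"
  let ?T = "\<lambda>a1 c b1 d. psi (a1 \<union> c) * psi (b1 \<union> d) * cnj (psi (b1 \<union> c) * psi (a1 \<union> d))"
  have "Q n psi s = (\<Sum>a\<in>Pow ?N. \<Sum>b\<in>Pow ?N. psi a * psi b * cnj (psi ((a - s) \<union> (b \<inter> s)) * psi ((b - s) \<union> (a \<inter> s))))"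
    unfolding Q_def by (simp add: sum.cartesian_product split_def PP_def sw_def)
  also have "\<dots> = (\<Sum>a\<in>Pow ?N. \<Sum>b1\<in>Pow s. \<Sum>d\<in>Pow (?N - s). psi a * psi (b1 \<union> d) * cnj (psi ((a - s) \<union> ((b1 \<union> d) \<inter> s)) * psi (((b1 \<union> d) - s) \<union> (a \<inter> s))))"
    by (rule sum.cong[OF refl]) (rule split_Pow[OF assms])
  also have "\<dots> = (\<Sum>a1\<in>Pow s. \<Sum>c\<in>Pow (?N - s). \<Sum>b1\<in>Pow s. \<Sum>d\<in>Pow (?N - s). psi (a1 \<union> c) * psi (b1 \<union> d) * cnj (psi (((a1 \<union> c) - s) \<union> ((b1 \<union> d) \<inter> s)) * psi (((b1 \<union> d) - s) \<union> ((a1 \<union> c) \<inter> s))))"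
    by (rule split_Pow[OF assms])
  also have "\<dots> = (\<Sum>a1\<in>Pow s. \<Sum>c\<in>Pow (?N - s). \<Sum>b1\<in>Pow s. \<Sum>d\<in>Pow (?N - s). ?T a1 c b1 d)"
  proof -
    have e1: "((a1 \<union> c) - s) = c" "(a1 \<union> c) \<inter> s = a1" if "a1 \<subseteq> s" "c \<subseteq> ?N - s" for a1 c
      using that by auto
    show ?thesis
      by (intro sum.cong refl) (simp add: e1 Un_commute)
  qed
  also have "\<dots> = (\<Sum>a1\<in>Pow s. \<Sum>b1\<in>Pow s. \<Sum>c\<in>Pow (?N - s). \<Sum>d\<in>Pow (?N - s). ?T a1 c b1 d)"
    by (rule sum.cong[OF refl]) (rule sum.swap)
  also have "\<dots> = purity n psi s"
    unfolding purity_def rdm_def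
    by (rule sum.cong[OF refl])+ (simp add: sum_product mult_ac)
  finally show ?thesis .
qed

lemma cnj_chi[simp]: "cnj (chi x g) = chi x g"
  by simp

lemma L1: "F n psi x a b * cnj (F n psi x a b) =
  (\<Sum>g\<in>Pow {0..<n}. \<Sum>h\<in>Pow {0..<n}. chi x g * chi x h * (Phi psi g a b * cnj (Phi psi h a b)))"
  unfolding F_def cnj_sum by (simp add: sum_product mult_ac)

lemma hc_dist_pair: "complex_of_real (hc_dist n 1 psi x) =
  (1 / 2 ^ n)^2 * (\<Sum>p\<in>Pow {0..<n} \<times> Pow {0..<n}. \<Sum>g\<in>Pow {0..<n}. \<Sum>h\<in>Pow {0..<n}.
     chi x g * chi x h * (Phi psi g (fst p) (snd p) * cnj (Phi psi h (fst p) (snd p))))"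
proof -
  have "complex_of_real (hc_dist n 1 psi x) =
    (1 / 2 ^ n)^2 * (\<Sum>a\<in>Pow {0..<n}. \<Sum>b\<in>Pow {0..<n}. complex_of_real ((cmod (F n psi x a b))\<^sup>2))"
    unfolding hc_dist1 by simp
  also have "\<dots> = (1 / 2 ^ n)^2 * (\<Sum>a\<in>Pow {0..<n}. \<Sum>b\<in>Pow {0..<n}. F n psi x a b * cnj (F n psi x a b))"
    by (simp only: complex_norm_square)
  also have "\<dots> = (1 / 2 ^ n)^2 * (\<Sum>p\<in>Pow {0..<n} \<times> Pow {0..<n}. F n psi x (fst p) (snd p) * cnj (F n psi x (fst p) (snd p)))"
    by (simp add: sum.cartesian_product split_def)
  finally show ?thesis by (simp only: L1)
qed

lemma chi_orth:
  assumes "g \<subseteq> {0..<n}" "h \<subseteq> {0..<n}" "s \<subseteq> {0..<n}"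
  shows "(\<Sum>x\<in>Pow {0..<n}. chi x g * chi x h * (chi x s :: complex)) =
         (if h = bitxor g s then 2 ^ n else 0)"
proof -
  have "(\<Sum>x\<in>Pow {0..<n}. chi x g * chi x h * (chi x s :: complex)) =
        (\<Sum>x\<in>Pow {0..<n}. chi x (bitxor (bitxor g h) s))"
    by (rule sum.cong[OF refl]) (auto simp: chi_mult finite_subset)
  also have "\<dots> = (if {0..<n} \<inter> bitxor (bitxor g h) s = {} then 2 ^ card {0..<n} else 0)"
    by (rule chi_sum) simp
  also have "({0..<n} \<inter> bitxor (bitxor g h) s = {}) = (h = bitxor g s)"
    using assms unfolding bitxor_def by blast
  finally show ?thesis by simp
qed

lemma swap4: "(\<Sum>x\<in>X. \<Sum>p\<in>Y. \<Sum>g\<in>G. \<Sum>h\<in>G. T x p g h) =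
   (\<Sum>p\<in>Y. \<Sum>g\<in>G. \<Sum>h\<in>G. \<Sum>x\<in>X. (T x p g h :: 'a::comm_monoid_add))"
proof -
  have "(\<Sum>x\<in>X. \<Sum>p\<in>Y. \<Sum>g\<in>G. \<Sum>h\<in>G. T x p g h) = (\<Sum>p\<in>Y. \<Sum>x\<in>X. \<Sum>g\<in>G. \<Sum>h\<in>G. T x p g h)"
    by (rule sum.swap)
  also have "\<dots> = (\<Sum>p\<in>Y. \<Sum>g\<in>G. \<Sum>x\<in>X. \<Sum>h\<in>G. T x p g h)"
    by (rule sum.cong[OF refl], rule sum.swap)
  also have "\<dots> = (\<Sum>p\<in>Y. \<Sum>g\<in>G. \<Sum>h\<in>G. \<Sum>x\<in>X. T x p g h)"
    by (rule sum.cong[OF refl], rule sum.cong[OF refl], rule sum.swap)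
  finally show ?thesis .
qed

lemma key:
  assumes s: "s \<subseteq> {0..<n}"
  shows "(\<Sum>x\<in>Pow {0..<n}. complex_of_real (hc_dist n 1 psi x) * chi x s) = purity n psi s"
proof -
  let ?N = "{0..<n}"
  let ?Y = "Pow ?N \<times> Pow ?N"
  let ?c = "(1 / 2 ^ n :: complex)^2"
  let ?P = "\<lambda>g h p. Phi psi g (fst p) (snd p) * cnj (Phi psi h (fst p) (snd p))"
  have "(\<Sum>x\<in>Pow ?N. complex_of_real (hc_dist n 1 psi x) * chi x s) =
     ?c * (\<Sum>x\<in>Pow ?N. \<Sum>p\<in>?Y. \<Sum>g\<in>Pow ?N. \<Sum>h\<in>Pow ?N. (chi x g * chi x h * chi x s) * ?P g h p)"
    unfolding hc_dist_pair by (simp add: sum_distrib_left sum_distrib_right mult_ac)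
  also have "\<dots> = ?c * (\<Sum>p\<in>?Y. \<Sum>g\<in>Pow ?N. \<Sum>h\<in>Pow ?N. \<Sum>x\<in>Pow ?N. (chi x g * chi x h * chi x s) * ?P g h p)"
    by (simp only: swap4)
  also have "\<dots> = ?c * (\<Sum>p\<in>?Y. \<Sum>g\<in>Pow ?N. \<Sum>h\<in>Pow ?N. if h = bitxor g s then 2 ^ n * ?P g h p else 0)"
  proof -
    have "(\<Sum>x\<in>Pow ?N. (chi x g * chi x h * chi x s) * ?P g h p) = (if h = bitxor g s then 2 ^ n * ?P g h p else 0)"
      if "g \<in> Pow ?N" "h \<in> Pow ?N" for g h p
      using chi_orth[of g n h s] that s by (simp add: sum_distrib_right[symmetric])
    then show ?thesis by (intro arg_cong[where f = "(*) ?c"] sum.cong refl) auto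
  qed
  also have "\<dots> = ?c * (\<Sum>p\<in>?Y. \<Sum>g\<in>Pow ?N. 2 ^ n * ?P g (bitxor g s) p)"
  proof -
    have "bitxor g s \<in> Pow ?N" if "g \<in> Pow ?N" for g using that s unfolding bitxor_def by auto
    then show ?thesis by (intro arg_cong[where f = "(*) ?c"] sum.cong refl) (simp add: sum.delta')
  qed
  also have "\<dots> = ?c * 2 ^ n * (\<Sum>g\<in>Pow ?N. \<Sum>p\<in>?Y. ?P g (bitxor g s) p)"
    by (subst sum.swap) (simp add: sum_distrib_left mult_ac)
  also have "\<dots> = ?c * 2 ^ n * (\<Sum>g\<in>Pow ?N. Q n psi s)"
    unfolding Q_def Phi_sw prod.collapse by (simp only: L5)
  also have "\<dots> = Q n psi s"
    by (simp add: card_Pow power2_eq_square)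
  also have "\<dots> = purity n psi s" using L7[OF s] .
  finally show ?thesis .
qed

lemma norm_sum_1:
  assumes "is_pure_state n psi"
  shows "(\<Sum>c\<in>Pow {0..<n}. psi c * cnj (psi c)) = 1"
proof -
  have "(\<Sum>c\<in>Pow {0..<n}. psi c * cnj (psi c)) = (\<Sum>c\<in>Pow {0..<n}. complex_of_real ((cmod (psi c))\<^sup>2))"
    by (simp only: complex_norm_square)
  also have "\<dots> = complex_of_real (\<Sum>c\<in>Pow {0..<n}. (cmod (psi c))\<^sup>2)" by simp
  also have "\<dots> = 1" using assms unfolding is_pure_state_def by simp
  finally show ?thesis .
qed

lemma purity_empty:
  assumes "is_pure_state n psi"
  shows "purity n psi {} = 1"
proof -
  have "rdm n psi {} {} {} = 1"
    unfolding rdm_def using norm_sum_1[OF assms] by simp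
  then show ?thesis unfolding purity_def by simp
qed

lemma purity_full:
  assumes "is_pure_state n psi"
  shows "purity n psi {0..<n} = 1"
proof -
  have r: "rdm n psi {0..<n} a b = psi a * cnj (psi b)" for a b
    unfolding rdm_def by simp
  have "purity n psi {0..<n} = (\<Sum>a\<in>Pow {0..<n}. \<Sum>b\<in>Pow {0..<n}. (psi a * cnj (psi a)) * (psi b * cnj (psi b)))"
    unfolding purity_def r by (simp add: mult_ac)
  also have "\<dots> = (\<Sum>a\<in>Pow {0..<n}. psi a * cnj (psi a)) * (\<Sum>b\<in>Pow {0..<n}. psi b * cnj (psi b))"
    by (simp add: sum_product)
  also have "\<dots> = 1" using norm_sum_1[OF assms] by simp
  finally show ?thesis .
qed

lemma key_real:
  assumes "s \<subseteq> {0..<n}"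
  shows "purity n psi s = complex_of_real (\<Sum>x\<in>Pow {0..<n}. hc_dist n 1 psi x * chi x s)"
  using key[OF assms, of psi, symmetric] by simp

lemma hc_nonneg: "hc_dist n t psi x \<ge> 0"
  unfolding hc_dist_def by (rule sum_nonneg) simp

lemma chi_real_cases: "(chi x s :: real) = (if even (card (x \<inter> s)) then 1 else -1)"
  by simp

lemma sum_p_1:
  assumes "is_pure_state n psi"
  shows "(\<Sum>x\<in>Pow {0..<n}. hc_dist n 1 psi x) = 1"
proof -
  have "complex_of_real (\<Sum>x\<in>Pow {0..<n}. hc_dist n 1 psi x * chi x {}) = 1"
    using key_real[OF empty_subsetI, of n psi] purity_empty[OF assms] by metis
  then have "(\<Sum>x\<in>Pow {0..<n}. hc_dist n 1 psi x * chi x {}) = 1"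
    by (simp only: of_real_eq_1_iff)
  then show ?thesis by simp
qed

lemma purity_1_iff:
  assumes "is_pure_state n psi" "s \<subseteq> {0..<n}"
  shows "purity n psi s = 1 \<longleftrightarrow> (\<forall>x\<in>Pow {0..<n}. hc_dist n 1 psi x > 0 \<longrightarrow> even (card (x \<inter> s)))"
proof -
  let ?p = "\<lambda>x. hc_dist n 1 psi x"
  have "purity n psi s = 1 \<longleftrightarrow> (\<Sum>x\<in>Pow {0..<n}. ?p x * chi x s) = 1"
    unfolding key_real[OF assms(2), of psi] by (simp only: of_real_eq_1_iff)
  also have "\<dots> \<longleftrightarrow> (\<Sum>x\<in>Pow {0..<n}. ?p x * (1 - chi x s)) = 0"
    using sum_p_1[OF assms(1)] by (simp add: algebra_simps sum_subtractf)
  also have "\<dots> \<longleftrightarrow> (\<forall>x\<in>Pow {0..<n}. ?p x * (1 - chi x s) = 0)"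
    by (rule sum_nonneg_eq_0_iff) (auto intro!: mult_nonneg_nonneg hc_nonneg simp: chi_real_cases)
  also have "\<dots> \<longleftrightarrow> (\<forall>x\<in>Pow {0..<n}. ?p x > 0 \<longrightarrow> even (card (x \<inter> s)))"
  proof -
    have "?p x * (1 - chi x s) = 0 \<longleftrightarrow> (?p x > 0 \<longrightarrow> even (card (x \<inter> s)))" for x
      using hc_nonneg[of n 1 psi x] by (auto simp: chi_real_cases)
    then show ?thesis by simp
  qed
  finally show ?thesis .
qed

lemma inv_bitgroup:
  assumes "x \<in> Pow {0..<n}"
  shows "inv\<^bsub>bitgroup n\<^esub> x = x"
proof -
  have e: "bitxor x y = {} \<longleftrightarrow> y = x" "bitxor y x = {} \<longleftrightarrow> y = x" for y unfolding bitxor_def by blast+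
  have "(THE y. y \<in> Pow {0..<n} \<and> bitxor x y = {} \<and> bitxor y x = {}) = x"
    by (rule the_equality) (use assms e in auto)
  then show ?thesis unfolding m_inv_def bitgroup_def by simp
qed

theorem mainTheorem5:
  fixes n :: nat and psi :: "nat set \<Rightarrow> complex" and H :: "nat set set"
  assumes "is_pure_state n psi"
    and "H = {s \<in> Pow {0..<n}. purity n psi s = 1}"
  shows "subgroup H (bitgroup n) \<and> {} \<in> H \<and> {0..<n} \<in> H
    \<and> (\<forall>s \<in> Pow {0..<n}.
          (s \<in> H \<longleftrightarrow> (\<forall>s' \<in> Pow {0..<n}. purity n psi (bitxor s' s) = purity n psi s'))
        \<and> (s \<in> H \<longleftrightarrow> (\<forall>x \<in> Pow {0..<n}. hc_dist n 1 psi x > 0 \<longrightarrow> bitdot x s = 0)))"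
proof -
  let ?N = "{0..<n}"
  let ?p = "\<lambda>x. hc_dist n 1 psi x"
  define G where "G s \<longleftrightarrow> (\<forall>x\<in>Pow ?N. ?p x > 0 \<longrightarrow> even (card (x \<inter> s)))" for s
  have HG: "H = {s \<in> Pow ?N. G s}"
    using assms(2) purity_1_iff[OF assms(1)] unfolding G_def by auto
  have xor_in: "bitxor s t \<in> Pow ?N" if "s \<in> Pow ?N" "t \<in> Pow ?N" for s t
    using that unfolding bitxor_def by auto
  have chi_x: "(chi x s :: real) * chi x t = chi x (bitxor s t)" if "x \<in> Pow ?N" for x s t
    using that by (intro chi_mult) (auto intro: finite_subset)
  have emp: "{} \<in> H" using assms(2) purity_empty[OF assms(1)] by simp
  have full: "?N \<in> H" using assms(2) purity_full[OF assms(1)] by simp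
  have closed: "bitxor s t \<in> H" if "s \<in> H" "t \<in> H" for s t
  proof -
    have "G (bitxor s t)" unfolding G_def
    proof (intro ballI impI)
      fix x assume x: "x \<in> Pow ?N" "?p x > 0"
      then have "even (card (x \<inter> s))" "even (card (x \<inter> t))" using that HG unfolding G_def by auto
      then have "(chi x s :: real) * chi x t = 1" by simp
      then have "(chi x (bitxor s t) :: real) = 1" using chi_x[OF x(1)] by simp
      then show "even (card (x \<inter> bitxor s t))" by (simp add: chi_real_cases split: if_splits)
    qed
    then show ?thesis using HG that xor_in by auto
  qed
  have sg: "subgroup H (bitgroup n)"
  proof
    show "H \<subseteq> carrier (bitgroup n)" using HG by (auto simp: bitgroup_def)
    show "x \<otimes>\<^bsub>bitgroup n\<^esub> y \<in> H" if "x \<in> H" "y \<in> H" for x y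
      using closed[OF that] by (simp add: bitgroup_def)
    show "\<one>\<^bsub>bitgroup n\<^esub> \<in> H" using emp by (simp add: bitgroup_def)
    show "inv\<^bsub>bitgroup n\<^esub> x \<in> H" if "x \<in> H" for x
      using that HG inv_bitgroup[of x n] by auto
  qed
  have partb: "s \<in> H \<longleftrightarrow> (\<forall>s' \<in> Pow ?N. purity n psi (bitxor s' s) = purity n psi s')"
    if s: "s \<in> Pow ?N" for s
  proof
    assume sH: "s \<in> H"
    show "\<forall>s' \<in> Pow ?N. purity n psi (bitxor s' s) = purity n psi s'"
    proof
      fix s' assume s': "s' \<in> Pow ?N"
      have "(\<Sum>x\<in>Pow ?N. ?p x * chi x (bitxor s' s)) = (\<Sum>x\<in>Pow ?N. ?p x * chi x s')"
      proof (rule sum.cong[OF refl])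
        fix x assume x: "x \<in> Pow ?N"
        show "?p x * chi x (bitxor s' s) = ?p x * chi x s'"
        proof (cases "?p x > 0")
          case True
          then have "even (card (x \<inter> s))" using sH HG x unfolding G_def by auto
          then show ?thesis using chi_x[OF x, of s' s, symmetric] by simp
        next
          case False
          then have "?p x = 0" using hc_nonneg[of n 1 psi x] by simp
          then show ?thesis by simp
        qed
      qed
      then show "purity n psi (bitxor s' s) = purity n psi s'"
        using key_real[of "bitxor s' s" n psi] key_real[of s' n psi] xor_in[OF s' s] s' by simp
    qed
  next
    assume "\<forall>s' \<in> Pow ?N. purity n psi (bitxor s' s) = purity n psi s'"
    then have "purity n psi (bitxor {} s) = purity n psi {}" by auto
    moreover have "bitxor {} s = s" unfolding bitxor_def by auto
    ultimately show "s \<in> H" using assms(2) purity_empty[OF assms(1)] s by simp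
  qed
  have partc: "s \<in> H \<longleftrightarrow> (\<forall>x \<in> Pow ?N. hc_dist n 1 psi x > 0 \<longrightarrow> bitdot x s = 0)"
    if s: "s \<in> Pow ?N" for s
    using s HG unfolding G_def bitdot_def by (auto simp: even_iff_mod_2_eq_zero)
  show ?thesis using sg emp full partb partc by blast
qed

end
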